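(* Let $n\ge1$ and set $\xi_0=1$, $\xi_{n+1}=-1$, and $\xi_k=\cos\frac{(2k-1)\pi}{2n+1}$ for $1\le k\le n$. Then $1=\xi_0>\xi_1>\cdots>\xi_n>\xi_{n+1}=-1$, and for each $1\le k\le n$ the polynomial $S_{2n}(x)$ has exactly one zero in the open interval $(\xi_{k+1},\xi_k)$. These $n$ zeros together with $x=1$ are all the zeros of $S_{2n}(x)$, and all of them are simple.
   Context: $U_n(x)$ is the Chebyshev polynomial of the second kind ($U_n(\cos\theta)=\sin((n+1)\theta)/\sin\theta$), with $U_{-1}=0$. For $n\ge0$, $S_{2n}(x)=(2nx+x+2n-1)U_n(x)-(2nx+3x+2n+1)U_{n-1}(x)$, a polynomial of degree $n+1$. *)

theory Defs
  imports "HOL-Analysis.Analysis" "HOL-Computational_Algebra.Polynomial"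
begin

fun chebU :: "nat \<Rightarrow> real poly" where
  "chebU 0 = 1"
| "chebU (Suc 0) = [:0, 2:]"
| "chebU (Suc (Suc n)) = [:0, 2:] * chebU (Suc n) - chebU n"

definition chebU_pred :: "nat \<Rightarrow> real poly" where
  "chebU_pred n = (if n = 0 then 0 else chebU (n - 1))"

text \<open>S_(2n)(x) = (2nx + x + 2n - 1) U_n(x) - (2nx + 3x + 2n + 1) U_(n-1)(x).\<close>
definition S2 :: "nat \<Rightarrow> real poly" where
  "S2 n = [: 2 * real n - 1, 2 * real n + 1 :] * chebU n
        - [: 2 * real n + 1, 2 * real n + 3 :] * chebU_pred n"

definition xi :: "nat \<Rightarrow> nat \<Rightarrow> real" where
  "xi n k = (if k = 0 then 1 else if k = n + 1 then -1
             else cos ((2 * real k - 1) * pi / (2 * real n + 1)))"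

end

theory Submission
  imports Defs
begin

lemma chebU_deg: "degree (chebU n) \<le> n"
proof (induction n rule: chebU.induct)
  case 1 then show ?case by simp
next
  case 2 then show ?case by simp
next
  case (3 n)
  have "degree ([:0, 2:] * chebU (Suc n)) \<le> Suc (Suc n)"
    using degree_mult_le[of "[:0,2::real:]" "chebU (Suc n)"] 3 by simp
  moreover have "degree (chebU n) \<le> Suc (Suc n)" using 3 by simp
  ultimately show ?case by (simp add: degree_diff_le)
qed

lemma sin_rec: "2 * cos t * sin a - sin (a - t) = sin (a + t)" for a t :: real
  by (simp add: sin_add sin_diff algebra_simps)

lemma chebU_sin: "poly (chebU m) (cos t) * sin t = sin (real (m+1) * t)"
proof (induction m rule: chebU.induct)
  case 1 then show ?case by simp
next
  case 2 then show ?case by (simp add: sin_double)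
next
  case (3 m)
  have a: "real (Suc (Suc m) + 1) * t = real (m+2) * t + t" by (simp add: algebra_simps)
  have b: "real (Suc m + 1) * t = real (m+2) * t" by (simp add: algebra_simps)
  have c: "real (m + 1) * t = real (m+2) * t - t" by (simp add: algebra_simps)
  have "poly (chebU (Suc (Suc m))) (cos t) * sin t
      = 2 * cos t * (poly (chebU (Suc m)) (cos t) * sin t) - poly (chebU m) (cos t) * sin t"
    by (simp add: algebra_simps)
  also have "\<dots> = 2 * cos t * sin (real (m+2) * t) - sin (real (m+2) * t - t)"
    using 3 b c by simp
  also have "\<dots> = sin (real (m+2) * t + t)"
    by (rule sin_rec)
  finally show ?case using a by simp
qed

lemma chebU_1: "poly (chebU m) 1 = real m + 1"
  by (induction m rule: chebU.induct) (auto simp: algebra_simps)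

lemma chebU_m1: "poly (chebU m) (-1) = (-1)^m * (real m + 1)"
  by (induction m rule: chebU.induct) (auto simp: algebra_simps)

lemma S2_deg: "degree (S2 n) \<le> n + 1"
proof -
  have d1: "degree ([: 2 * real n - 1, 2 * real n + 1 :] * chebU n) \<le> n + 1"
    using degree_mult_le[of "[: 2 * real n - 1, 2 * real n + 1 :]" "chebU n"] chebU_deg[of n]
    by (simp add: degree_pCons_le)
  have "degree (chebU_pred n) \<le> n"
    using chebU_deg[of "n-1"] by (auto simp: chebU_pred_def)
  then have d2: "degree ([: 2 * real n + 1, 2 * real n + 3 :] * chebU_pred n) \<le> n + 1"
    using degree_mult_le[of "[: 2 * real n + 1, 2 * real n + 3 :]" "chebU_pred n"]
    by simp
  show ?thesis unfolding S2_def using d1 d2 by (meson degree_diff_le)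
qed

lemma S2_at_1: "n \<ge> 1 \<Longrightarrow> poly (S2 n) 1 = 0"
  by (simp add: S2_def chebU_pred_def chebU_1 algebra_simps of_nat_diff)

lemma S2_at_m1: "n \<ge> 1 \<Longrightarrow> poly (S2 n) (-1) = (-1)^(n+1) * (4 * real n + 2)"
proof -
  assume "n \<ge> 1"
  then obtain m where n: "n = Suc m" by (cases n) auto
  show ?thesis by (simp add: n S2_def chebU_pred_def chebU_m1 algebra_simps)
qed

lemma xi_dec:
  assumes "j < k" "k \<le> n + 1"
  shows "xi n k < xi n j"
proof -
  define th where "th = (\<lambda>k::nat. (2 * real k - 1) * pi / (2 * real n + 1))"
  have thpos: "0 < th i" if "1 \<le> i" for i
    using that by (auto simp: th_def intro!: divide_pos_pos)
  have thlt: "th i < pi" if "i \<le> n" for i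
  proof -
    have "(2 * real i - 1) * pi < (2 * real n + 1) * pi" using that by (intro mult_strict_right_mono) auto
    then show ?thesis by (simp add: th_def divide_less_eq)
  qed
  have xith: "xi n i = cos (th i)" if "1 \<le> i" "i \<le> n" for i
    using that by (simp add: xi_def th_def)
  show ?thesis
  proof (cases "j = 0")
    case True
    show ?thesis
    proof (cases "k = n + 1")
      case True then show ?thesis using \<open>j = 0\<close> by (simp add: xi_def)
    next
      case False
      then have kn: "k \<le> n" "1 \<le> k" using assms True by auto
      have "cos (th k) < cos 0" using thpos[OF kn(2)] thlt[OF kn(1)]
        by (intro cos_monotone_0_pi) auto
      then show ?thesis using False True assms xith[of k] by (simp add: xi_def)
    qed
  next
    case False
    show ?thesis
    proof (cases "k = n + 1")
      case True
      have jn: "j \<le> n" "1 \<le> j" using assms True False by auto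
      have "cos pi < cos (th j)" using thpos[OF jn(2)] thlt[OF jn(1)]
        by (intro cos_monotone_0_pi) auto
      then show ?thesis using False True assms xith[of j] by (simp add: xi_def)
    next
      case F2: False
      have "th j < th k" using assms False
        by (simp add: th_def divide_strict_right_mono)
      moreover have jn: "k \<le> n" "1 \<le> j" using assms F2 False by auto
      ultimately have "cos (th k) < cos (th j)" using thpos[OF jn(2)] thlt[OF jn(1)]
        by (intro cos_monotone_0_pi) (auto simp: less_imp_le)
      then show ?thesis using False F2 assms xith[of j] xith[of k] by simp
    qed
  qed
qed

lemma S2_at_xi:
  assumes "1 \<le> k" "k \<le> n"
  shows "(-1)^k * poly (S2 n) (xi n k) > 0"
proof -
  define th where "th = (2 * real k - 1) * pi / (2 * real n + 1)"
  have thpos: "0 < th" using assms by (auto simp: th_def intro!: divide_pos_pos)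
  have thlt: "th < pi"
  proof -
    have "(2 * real k - 1) * pi < (2 * real n + 1) * pi" using assms by (intro mult_strict_right_mono) auto
    then show ?thesis by (simp add: th_def divide_less_eq)
  qed
  have x: "xi n k = cos th" using assms by (simp add: xi_def th_def)
  have s: "sin th > 0" using thpos thlt by (rule sin_gt_zero)
  have c: "cos (th/2) > 0" using thpos thlt by (intro cos_gt_zero_pi) auto
  have thn: "th * (2 * real n + 1) = (2 * real k - 1) * pi" by (simp add: th_def)
  have e1: "real (n+1) * th = real (k-1) * pi + (pi/2 + th/2)"
    using thn assms by (simp add: of_nat_diff algebra_simps)
  have e2: "real (n-1+1) * th = real (k-1) * pi + (pi/2 - th/2)"
    using thn assms by (simp add: of_nat_diff algebra_simps)
  have sn1: "sin (real (n+1) * th) = (-1)^(k-1) * cos (th/2)"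
    unfolding e1 by (simp add: sin_add cos_add)
  have sn0: "sin (real (n-1+1) * th) = (-1)^(k-1) * cos (th/2)"
    unfolding e2 by (simp add: sin_add sin_diff cos_diff)
  have u1: "poly (chebU n) (cos th) * sin th = (-1)^(k-1) * cos (th/2)"
    using chebU_sin[of n th] sn1 by simp
  have u0: "poly (chebU (n-1)) (cos th) * sin th = (-1)^(k-1) * cos (th/2)"
    using chebU_sin[of "n-1" th] sn0 by simp
  have np: "chebU_pred n = chebU (n-1)" using assms by (simp add: chebU_pred_def)
  have "poly (S2 n) (cos th) * sin th =
      ((2 * real n - 1) + (2 * real n + 1) * cos th) * (poly (chebU n) (cos th) * sin th)
      - ((2 * real n + 1) + (2 * real n + 3) * cos th) * (poly (chebU (n-1)) (cos th) * sin th)"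
    by (simp add: S2_def np algebra_simps)
  also have "\<dots> = -2 * (1 + cos th) * ((-1)^(k-1) * cos (th/2))"
    unfolding u1 u0 by (simp add: algebra_simps)
  finally have eq: "poly (S2 n) (cos th) * sin th = -2 * (1 + cos th) * ((-1)^(k-1) * cos (th/2))" .
  obtain k' where k': "k = Suc k'" using assms by (cases k) auto
  have kk: "(-1::real)^k = - ((-1)^(k-1))" by (simp add: k')
  have sq: "((-1::real)^(k-1)) * ((-1)^(k-1)) = 1"
    by (simp flip: power_mult_distrib)
  have "-1 < xi n k" using xi_dec[of k "n+1" n] assms by (simp add: xi_def)
  then have cp: "1 + cos th > 0" using x by simp
  have "(-1)^k * poly (S2 n) (cos th) * sin th = - ((-1)^(k-1)) * (poly (S2 n) (cos th) * sin th)"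
    by (simp add: kk)
  also have "\<dots> = - ((-1)^(k-1)) * (-2 * (1 + cos th) * ((-1)^(k-1) * cos (th/2)))"
    by (simp only: eq)
  also have "\<dots> = 2 * (1 + cos th) * cos (th/2) * (((-1::real)^(k-1)) * ((-1)^(k-1)))"
    by (simp only: mult_ac mult_minus_left minus_minus)
  also have "\<dots> = 2 * (1 + cos th) * cos (th/2)" by (simp only: sq mult_1_right)
  finally have "(-1)^k * poly (S2 n) (cos th) * sin th = 2 * (1 + cos th) * cos (th/2)" .
  moreover have "2 * (1 + cos th) * cos (th/2) > 0" using cp c by simp
  ultimately have "((-1)^k * poly (S2 n) (cos th)) * sin th > 0" by simp
  then show ?thesis using s x by (simp add: zero_less_mult_iff)
qed


lemma poly_map_of_real: "poly (map_poly complex_of_real p) (complex_of_real x) = complex_of_real (poly p x)"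
  by (induction p) (auto simp: map_poly_pCons)

lemma xi_le: "j \<le> k \<Longrightarrow> k \<le> n + 1 \<Longrightarrow> xi n k \<le> xi n j"
  using xi_dec[of j k n] by (cases "j = k") auto

lemma sign_step:
  assumes "(-1::real)^k * a > 0" "(-1)^(k+1) * b > 0"
  shows "a * b < 0"
proof -
  have sq: "((-1::real)^k) * ((-1)^k) = 1" by (simp flip: power_mult_distrib)
  have "((-1)^k * a) * ((-1)^(k+1) * b) = - (a * b) * (((-1::real)^k) * ((-1)^k))"
    by (simp add: algebra_simps)
  then have "((-1)^k * a) * ((-1)^(k+1) * b) = - (a * b)" using sq by simp
  moreover have "((-1)^k * a) * ((-1)^(k+1) * b) > 0" by (rule mult_pos_pos[OF assms])
  ultimately show ?thesis by linarith
qed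

theorem mainTheorem13:
  fixes n :: nat
  assumes "n \<ge> 1"
  shows "xi n 0 = 1 \<and> xi n (n + 1) = -1
    \<and> (\<forall>k \<le> n. xi n (k + 1) < xi n k)
    \<and> (\<forall>k \<in> {1..n}. card {x. xi n (k + 1) < x \<and> x < xi n k \<and> poly (S2 n) x = 0} = 1)
    \<and> {z :: complex. poly (map_poly complex_of_real (S2 n)) z = 0}
        = complex_of_real ` ({1} \<union> (\<Union>k \<in> {1..n}. {x. xi n (k + 1) < x \<and> x < xi n k \<and> poly (S2 n) x = 0}))
    \<and> (\<forall>z :: complex. poly (map_poly complex_of_real (S2 n)) z = 0
          \<longrightarrow> order z (map_poly complex_of_real (S2 n)) = 1)"
proof -
  define S where "S = S2 n"
  define P where "P = map_poly complex_of_real S"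
  define Z where "Z = {z. poly P z = 0}"
  define I where "I = (\<lambda>k. {x. xi n (k + 1) < x \<and> x < xi n k \<and> poly S x = 0})"
  have h0: "xi n 0 = 1" "xi n (n+1) = -1" by (auto simp: xi_def)
  have hdec: "\<forall>k \<le> n. xi n (k + 1) < xi n k" using xi_dec by auto
  have Sm1: "poly S (-1) \<noteq> 0" using S2_at_m1[OF assms] by (simp add: S_def)
  have Pne: "P \<noteq> 0"
  proof
    assume "P = 0"
    then have "poly P (complex_of_real (-1)) = 0" by simp
    then show False using Sm1 by (simp add: P_def poly_map_of_real del: of_real_minus of_real_1)
  qed
  have degP: "degree P \<le> n + 1"
    using S2_deg[of n] by (simp add: P_def S_def degree_map_poly)
  have Zfin: "finite Z" using poly_roots_finite[OF Pne] by (simp add: Z_def)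
  have Zcard: "card Z \<le> n + 1"
    using card_poly_roots_bound[OF Pne] degP by (simp add: Z_def)
  have ex: "\<exists>x. xi n (k+1) < x \<and> x < xi n k \<and> poly S x = 0" if k: "k \<in> {1..n}" for k
  proof -
    have a: "(-1)^k * poly S (xi n k) > 0" using S2_at_xi[of k n] k by (simp add: S_def)
    have b: "(-1)^(k+1) * poly S (xi n (k+1)) > 0"
    proof (cases "k = n")
      case True
      then show ?thesis using S2_at_m1[OF assms] h0
        by (simp add: S_def flip: power_mult_distrib)
    next
      case False
      then show ?thesis using S2_at_xi[of "k+1" n] k by (simp add: S_def)
    qed
    have "poly S (xi n (k+1)) * poly S (xi n k) < 0" using sign_step[OF a b] by (simp add: mult.commute)
    then show ?thesis using poly_IVT[of "xi n (k+1)" "xi n k" S] hdec k by auto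
  qed
  obtain r where r: "\<forall>k\<in>{1..n}. xi n (k+1) < r k \<and> r k < xi n k \<and> poly S (r k) = 0"
    using ex by metis
  have sep: "r k < r j" if "j < k" "j \<in> {1..n}" "k \<in> {1..n}" for j k
  proof -
    have "xi n k \<le> xi n (j+1)" using xi_le[of "j+1" k n] that by auto
    moreover have "r k < xi n k" "xi n (j+1) < r j" using r that by auto
    ultimately show ?thesis by linarith
  qed
  have inj: "inj_on r {1..n}"
  proof (rule inj_onI)
    fix j k assume "j \<in> {1..n}" "k \<in> {1..n}" "r j = r k"
    then show "j = k" using sep[of j k] sep[of k j] by (cases j k rule: linorder_cases) auto
  qed
  have rlt1: "r k < 1" if "k \<in> {1..n}" for k
    using r that xi_dec[of 0 k n] h0 by force
  define A where "A = insert 1 (r ` {1..n})"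
  have "1 \<notin> r ` {1..n}" using rlt1 by force
  then have Acard: "card A = n + 1"
    using inj by (simp add: A_def card_image)
  have p1: "poly P (complex_of_real 1) = 0"
    unfolding P_def poly_map_of_real using S2_at_1[OF assms] by (simp add: S_def)
  have AZ: "complex_of_real ` A \<subseteq> Z"
    using r assms p1 by (auto simp: A_def Z_def P_def S_def poly_map_of_real)
  have cimg: "card (complex_of_real ` A) = n + 1"
    using Acard by (subst card_image) (auto simp: inj_on_def)
  have ZA: "Z = complex_of_real ` A"
    using card_subset_eq[OF Zfin AZ] cimg Zcard by (metis card_mono Zfin AZ le_antisym)
  have Ik: "I k = {r k}" if k: "k \<in> {1..n}" for k
  proof
    show "{r k} \<subseteq> I k" using r k by (auto simp: I_def)
  next
    show "I k \<subseteq> {r k}"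
    proof
      fix x assume x: "x \<in> I k"
      then have "complex_of_real x \<in> Z" by (auto simp: I_def Z_def P_def poly_map_of_real)
      then have "x \<in> A" using ZA by auto
      moreover have "x \<noteq> 1" using x xi_dec[of 0 k n] h0 k by (auto simp: I_def)
      ultimately obtain j where j: "j \<in> {1..n}" "x = r j" by (auto simp: A_def)
      have "j = k"
      proof (rule ccontr)
        assume "j \<noteq> k"
        then consider "j < k" | "k < j" by linarith
        then show False
        proof cases
          case 1
          have "xi n k \<le> xi n (j+1)" using xi_le[of "j+1" k n] 1 k by auto
          moreover have "xi n (j+1) < r j" "x < xi n k" using r j x by (auto simp: I_def)
          ultimately show False using j by linarith
        next
          case 2
          have "xi n j \<le> xi n (k+1)" using xi_le[of "k+1" j n] 2 j by auto
          moreover have "r j < xi n j" "xi n (k+1) < x" using r j x by (auto simp: I_def)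
          ultimately show False using j by linarith
        qed
      qed
      then show "x \<in> {r k}" using j by simp
    qed
  qed
  have card1: "\<forall>k \<in> {1..n}. card (I k) = 1" using Ik by simp
  have UI: "(\<Union>k \<in> {1..n}. I k) = r ` {1..n}" using Ik by auto
  have Zeq: "Z = complex_of_real ` ({1} \<union> (\<Union>k \<in> {1..n}. I k))"
    using ZA UI by (simp add: A_def)
  have ord: "order z P = 1" if z: "z \<in> Z" for z
  proof (rule ccontr)
    assume ne: "order z P \<noteq> 1"
    have pos: "order w P \<ge> 1" if "w \<in> Z" for w
      using that Pne order_root[of P w] by (auto simp: Z_def)
    then have "order z P \<ge> 2" using ne z by (metis le_antisym not_less_eq_eq one_add_one plus_1_eq_Suc)
    have "(\<Sum>w\<in>Z. order w P) = order z P + (\<Sum>w\<in>Z - {z}. order w P)"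
      using Zfin z by (simp add: sum.remove)
    also have "(\<Sum>w\<in>Z - {z}. order w P) \<ge> (\<Sum>w\<in>Z - {z}. 1)"
      using pos by (intro sum_mono) auto
    then have "order z P + (\<Sum>w\<in>Z - {z}. order w P) \<ge> 2 + card (Z - {z})"
      using \<open>order z P \<ge> 2\<close> by simp
    moreover have "card (Z - {z}) = n" using cimg ZA z Zfin by (simp add: card_Diff_singleton)
    ultimately have "(\<Sum>w\<in>Z. order w P) \<ge> n + 2" by simp
    moreover have "(\<Sum>w\<in>Z. order w P) \<le> n + 1"
      using sum_order_le_degree[OF Pne] degP by (simp add: Z_def)
    ultimately show False by simp
  qed
  have f1: "\<forall>k \<in> {1..n}. card {x. xi n (k + 1) < x \<and> x < xi n k \<and> poly (S2 n) x = 0} = 1"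
    using card1 unfolding I_def S_def .
  have f2: "{z :: complex. poly (map_poly complex_of_real (S2 n)) z = 0}
        = complex_of_real ` ({1} \<union> (\<Union>k \<in> {1..n}. {x. xi n (k + 1) < x \<and> x < xi n k \<and> poly (S2 n) x = 0}))"
    using Zeq unfolding I_def Z_def P_def S_def .
  have f3: "\<forall>z :: complex. poly (map_poly complex_of_real (S2 n)) z = 0
          \<longrightarrow> order z (map_poly complex_of_real (S2 n)) = 1"
    using ord unfolding Z_def P_def S_def by blast
  show ?thesis using h0 hdec f1 f2 f3 by blast
qed

end
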